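(* For every $n\ge2$ we have $L_n\subseteq C_n$.
   Context: $C_n$ is the set of all numbers $f$ such that there exist $n$ distinct circles in the Euclidean plane, not in general position, with every two of the circles having at least one common point, whose union has complement in the plane consisting of exactly $f$ connected components. $L_n$ is the set of all numbers of connected components of the complement in the plane of the union of $n$ distinct lines not in general position (no further condition on intersections). Circles are in general position if no two are tangent and no three pass through a common point; lines are in general position if no two are parallel and no three pass through a common point. *)

theory Defs
  imports "HOL-Analysis.Analysis"
begin

text \<open>The Euclidean plane is modelled by the type complex.
  Circles and lines are represented as point sets, so "n distinct circles/lines"
  is a set of n such point sets.\<close>

definition is_circle :: "complex set \<Rightarrow> bool" where
  "is_circle S \<longleftrightarrow> (\<exists>c r. r > 0 \<and> S = sphere c r)"

definition is_line :: "complex set \<Rightarrow> bool" where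
  "is_line L \<longleftrightarrow> (\<exists>a b. a \<noteq> b \<and> L = affine hull {a, b})"

definition circles_tangent :: "complex set \<Rightarrow> complex set \<Rightarrow> bool" where
  "circles_tangent C1 C2 \<longleftrightarrow> C1 \<noteq> C2 \<and> (\<exists>!p. p \<in> C1 \<inter> C2)"

definition circles_general_position :: "complex set set \<Rightarrow> bool" where
  "circles_general_position F \<longleftrightarrow>
     (\<forall>C1\<in>F. \<forall>C2\<in>F. \<not> circles_tangent C1 C2) \<and>
     (\<forall>C1\<in>F. \<forall>C2\<in>F. \<forall>C3\<in>F. C1 \<noteq> C2 \<and> C1 \<noteq> C3 \<and> C2 \<noteq> C3 \<longrightarrow> C1 \<inter> C2 \<inter> C3 = {})"

definition lines_parallel :: "complex set \<Rightarrow> complex set \<Rightarrow> bool" where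
  "lines_parallel L1 L2 \<longleftrightarrow> (\<exists>v. L2 = (\<lambda>x. x + v) ` L1)"

definition lines_general_position :: "complex set set \<Rightarrow> bool" where
  "lines_general_position F \<longleftrightarrow>
     (\<forall>L1\<in>F. \<forall>L2\<in>F. L1 \<noteq> L2 \<longrightarrow> \<not> lines_parallel L1 L2) \<and>
     (\<forall>L1\<in>F. \<forall>L2\<in>F. \<forall>L3\<in>F. L1 \<noteq> L2 \<and> L1 \<noteq> L3 \<and> L2 \<noteq> L3 \<longrightarrow> L1 \<inter> L2 \<inter> L3 = {})"

definition num_regions :: "complex set \<Rightarrow> nat" where
  "num_regions U = card (components (- U))"

definition C_set :: "nat \<Rightarrow> nat set" where
  "C_set n = {f. \<exists>F. card F = n \<and> (\<forall>C\<in>F. is_circle C) \<and>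
       \<not> circles_general_position F \<and>
       (\<forall>C1\<in>F. \<forall>C2\<in>F. C1 \<inter> C2 \<noteq> {}) \<and>
       finite (components (- \<Union>F)) \<and> f = num_regions (\<Union>F)}"

definition L_set :: "nat \<Rightarrow> nat set" where
  "L_set n = {f. \<exists>F. card F = n \<and> (\<forall>L\<in>F. is_line L) \<and>
       \<not> lines_general_position F \<and>
       finite (components (- \<Union>F)) \<and> f = num_regions (\<Union>F)}"

end

theory Submission
  imports Defs
begin

lemma aff2: "affine hull {a, b::complex} = {a + t *\<^sub>R (b - a) | t. True}"
proof -
  have "u *\<^sub>R a + v *\<^sub>R b = a + v *\<^sub>R (b - a)" if "u + v = 1" for u v
  proof -
    have "u *\<^sub>R a + v *\<^sub>R b = (u + v) *\<^sub>R a + v *\<^sub>R (b - a)" by (simp add: algebra_simps)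
    then show ?thesis using that by simp
  qed
  moreover have "a + t *\<^sub>R (b - a) = (1 - t) *\<^sub>R a + t *\<^sub>R b" for t
    by (simp add: algebra_simps)
  ultimately show ?thesis unfolding affine_hull_2 by fastforce
qed

lemma test1:
  fixes w d :: complex
  assumes d0: "d \<noteq> 0" and e: "Im w * Re d = Re w * Im d"
  shows "w = ((Re w * Re d + Im w * Im d) / ((Re d)^2 + (Im d)^2)) *\<^sub>R d"
proof -
  have pos: "(Re d)^2 + (Im d)^2 \<noteq> 0" using d0
    by (simp add: complex_eq_iff sum_power2_eq_zero_iff)
  show ?thesis using pos e
    by (simp add: complex_eq_iff field_simps power2_eq_square)
qed

lemma line_normal:
  assumes "is_line L"
  shows "\<exists>\<nu> c. \<nu> \<noteq> 0 \<and> L = {z. Re (z * cnj \<nu>) = c}"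
proof -
  obtain a b where ab: "a \<noteq> b" "L = affine hull {a,b}" using assms unfolding is_line_def by blast
  define d where "d = b - a"
  have d0: "d \<noteq> 0" using ab d_def by auto
  have L: "L = {a + t *\<^sub>R d | t. True}"
    unfolding ab(2) aff2 d_def ..
  have "L = {z. Re (z * cnj (\<i> * d)) = Re (a * cnj (\<i> * d))}"
  proof (intro set_eqI iffI)
    fix z assume "z \<in> L"
    then obtain t where "z = a + t *\<^sub>R d" using L by auto
    then show "z \<in> {z. Re (z * cnj (\<i> * d)) = Re (a * cnj (\<i> * d))}"
      by (simp add: algebra_simps scaleR_conv_of_real)
  next
    fix z assume "z \<in> {z. Re (z * cnj (\<i> * d)) = Re (a * cnj (\<i> * d))}"
    then have e: "Im (z - a) * Re d = Re (z - a) * Im d" by (simp add: algebra_simps)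
    obtain t where "z - a = t *\<^sub>R d" using test1[OF d0 e] by blast
    then have "z = a + t *\<^sub>R d" by (metis add.commute diff_add_cancel)
    then show "z \<in> L" using L by auto
  qed
  moreover have "\<i> * d \<noteq> 0" using d0 by simp
  ultimately show ?thesis by blast
qed

lemma line_closed_interior:
  assumes "is_line L"
  shows "closed L \<and> interior L = {}"
proof -
  obtain a b where ab: "a \<noteq> b" "L = affine hull {a,b}" using assms unfolding is_line_def by blast
  have "card {a, b} \<le> DIM(complex)" by (simp add: card_insert_if)
  then show ?thesis using ab empty_interior_affine_hull[of "{a,b}"] by simp
qed

lemma union_empty_interior:
  assumes "finite F" "\<forall>L\<in>F. closed L \<and> interior L = {}"
  shows "interior (\<Union>F) = ({} :: complex set)"
  using assms
proof (induction F rule: finite_induct)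
  case empty then show ?case by simp
next
  case (insert L F)
  then have "interior (L \<union> \<Union>F) = interior L"
    by (intro interior_closed_Un_empty_interior) auto
  then show ?case using insert by simp
qed

lemma circle_eq:
  fixes \<nu> :: complex and c :: real
  assumes c0: "c \<noteq> 0"
  shows "{u. c * (cmod u)^2 = Re (u * \<nu>)} = sphere (cnj \<nu> / of_real (2*c)) (cmod \<nu> / (2 * \<bar>c\<bar>))"
proof (intro set_eqI)
  fix u
  have "u \<in> sphere (cnj \<nu> / of_real (2*c)) (cmod \<nu> / (2 * \<bar>c\<bar>)) \<longleftrightarrow>
     (dist (cnj \<nu> / of_real (2*c)) u)^2 = (cmod \<nu> / (2 * \<bar>c\<bar>))^2"
    by (simp add: power2_eq_iff_nonneg)
  also have "\<dots> \<longleftrightarrow> (Re \<nu> / (2*c) - Re u)^2 + (- Im \<nu> / (2*c) - Im u)^2 = ((Re \<nu>)^2 + (Im \<nu>)^2) / (4 * c^2)"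
    by (simp add: dist_norm cmod_power2 power_divide power_mult_distrib)
  also have "\<dots> \<longleftrightarrow> c * ((Re u)^2 + (Im u)^2) = Re u * Re \<nu> - Im u * Im \<nu>"
    using c0 by (simp add: field_simps power2_eq_square) algebra
  also have "\<dots> \<longleftrightarrow> u \<in> {u. c * (cmod u)^2 = Re (u * \<nu>)}"
    by (simp add: cmod_power2)
  finally show "u \<in> {u. c * (cmod u)^2 = Re (u * \<nu>)} \<longleftrightarrow> u \<in> sphere (cnj \<nu> / of_real (2*c)) (cmod \<nu> / (2 * \<bar>c\<bar>))" by simp
qed

lemma inv_line_eq:
  fixes \<nu> :: complex and c :: real and u :: complex
  assumes "u \<noteq> 0"
  shows "Re (inverse u * cnj \<nu>) = c \<longleftrightarrow> c * (cmod u)^2 = Re (u * \<nu>)"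
proof -
  have n: "(cmod u)^2 \<noteq> 0" using assms by simp
  have "Re (inverse u * cnj \<nu>) = Re (u * \<nu>) / (cmod u)^2"
    by (simp add: inverse_eq_divide Re_divide cmod_power2 field_simps)
  then show ?thesis using n by (auto simp: divide_eq_eq mult.commute)
qed

lemma line_to_circle:
  fixes \<nu> Q :: complex and c :: real
  assumes \<nu>0: "\<nu> \<noteq> 0" and L: "L = {z. Re (z * cnj \<nu>) = c}" and Q: "Q \<notin> L"
  shows "is_circle ((\<lambda>z. inverse (z - Q)) ` L \<union> {0})"
proof -
  define c' where "c' = c - Re (Q * cnj \<nu>)"
  have c'0: "c' \<noteq> 0" using Q L c'_def by auto
  have "(\<lambda>z. inverse (z - Q)) ` L \<union> {0} = {u. c' * (cmod u)^2 = Re (u * \<nu>)}"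
  proof (intro set_eqI iffI)
    fix u assume "u \<in> (\<lambda>z. inverse (z - Q)) ` L \<union> {0}"
    then consider "u = 0" | z where "z \<in> L" "u = inverse (z - Q)" by blast
    then show "u \<in> {u. c' * (cmod u)^2 = Re (u * \<nu>)}"
    proof cases
      case 1 then show ?thesis by simp
    next
      case 2
      then have zO: "z \<noteq> Q" using Q by auto
      then have u0: "u \<noteq> 0" using 2 by simp
      have "inverse u = z - Q" using 2 by simp
      then have "Re (inverse u * cnj \<nu>) = c'" using 2 L c'_def by (simp add: algebra_simps)
      then show ?thesis using inv_line_eq[OF u0] by simp
    qed
  next
    fix u assume u: "u \<in> {u. c' * (cmod u)^2 = Re (u * \<nu>)}"
    show "u \<in> (\<lambda>z. inverse (z - Q)) ` L \<union> {0}"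
    proof (cases "u = 0")
      case True then show ?thesis by simp
    next
      case False
      have "Re (inverse u * cnj \<nu>) = c'" using inv_line_eq[OF False] u by simp
      then have "inverse u + Q \<in> L" using L c'_def by (simp add: algebra_simps)
      moreover have "u = inverse ((inverse u + Q) - Q)" by simp
      ultimately show ?thesis by blast
    qed
  qed
  also have "\<dots> = sphere (cnj \<nu> / of_real (2*c')) (cmod \<nu> / (2 * \<bar>c'\<bar>))"
    by (rule circle_eq[OF c'0])
  finally have e: "(\<lambda>z. inverse (z - Q)) ` L \<union> {0} = sphere (cnj \<nu> / of_real (2*c')) (cmod \<nu> / (2 * \<bar>c'\<bar>))" .
  have "cmod \<nu> / (2 * \<bar>c'\<bar>) > 0" using \<nu>0 c'0 by simp
  then show ?thesis unfolding is_circle_def e by blast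
qed

lemma parallel_disjoint:
  assumes "is_line L1" "L1 \<noteq> L2" "lines_parallel L1 L2"
  shows "L1 \<inter> L2 = {}"
proof -
  obtain \<nu> c where n: "\<nu> \<noteq> 0" "L1 = {z. Re (z * cnj \<nu>) = c}" using line_normal[OF assms(1)] by blast
  obtain v where v: "L2 = (\<lambda>x. x + v) ` L1" using assms(3) unfolding lines_parallel_def by blast
  have L2: "L2 = {z. Re (z * cnj \<nu>) = c + Re (v * cnj \<nu>)}"
  proof (intro set_eqI iffI)
    fix z assume "z \<in> L2"
    then obtain y where "y \<in> L1" "z = y + v" using v by blast
    then show "z \<in> {z. Re (z * cnj \<nu>) = c + Re (v * cnj \<nu>)}" using n by (simp add: algebra_simps)
  next
    fix z assume "z \<in> {z. Re (z * cnj \<nu>) = c + Re (v * cnj \<nu>)}"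
    then have "z - v \<in> L1" using n by (simp add: algebra_simps)
    moreover have "z = (z - v) + v" by simp
    ultimately show "z \<in> L2" using v by blast
  qed
  have "Re (v * cnj \<nu>) \<noteq> 0" using L2 n assms(2) by auto
  then show ?thesis using L2 n by auto
qed

lemma three_distinct:
  assumes "3 \<le> card A"
  shows "\<exists>x y z. x \<in> A \<and> y \<in> A \<and> z \<in> A \<and> x \<noteq> y \<and> x \<noteq> z \<and> y \<noteq> z"
proof -
  have "finite A" using assms card.infinite by fastforce
  then obtain B where "B \<subseteq> A" "card B = 3" using obtain_subset_with_card_n assms by metis
  then show ?thesis unfolding card_3_iff by auto
qed

lemma homeo_component:
  assumes h: "homeomorphism S T f g" and C: "C \<in> components S"
  shows "f ` C \<in> components T"
proof -
  have CS: "C \<subseteq> S" "connected C" "C \<noteq> {}"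
    using in_components_subset[OF C] in_components_connected[OF C] in_components_nonempty[OF C] by auto
  have cf: "continuous_on S f" and cg: "continuous_on T g"
    using h unfolding homeomorphism_def by auto
  have fST: "f ` S = T" "g ` T = S" using h homeomorphism_image1 homeomorphism_image2 by blast+
  show ?thesis
    unfolding in_components_maximal
  proof (intro conjI allI impI)
    show "f ` C \<noteq> {}" using CS by auto
    show "f ` C \<subseteq> T" using CS fST by auto
    show "connected (f ` C)"
      using CS cf connected_continuous_image continuous_on_subset by blast
    fix D assume D: "D \<noteq> {} \<and> f ` C \<subseteq> D \<and> D \<subseteq> T \<and> connected D"
    have gD: "connected (g ` D)"
      using D cg connected_continuous_image continuous_on_subset by blast
    have "g ` f ` C = C" using CS h homeomorphism_apply1 by (force simp: image_image)
    then have "C \<subseteq> g ` D" using D by blast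
    moreover have "g ` D \<subseteq> S" using D fST(2) by blast
    ultimately have "g ` D \<subseteq> C" using components_maximal[OF C gD] CS(3) \<open>C \<subseteq> g ` D\<close> by blast
    then have "g ` D = C" using \<open>C \<subseteq> g ` D\<close> by blast
    then have "f ` g ` D = f ` C" by simp
    moreover have "f ` g ` D = D"
    proof -
      have "\<forall>y\<in>D. f (g y) = y" using D homeomorphism_apply2[OF h] by blast
      then show ?thesis by (simp add: image_image)
    qed
    ultimately show "D = f ` C" by simp
  qed
qed

lemma homeo_components:
  assumes h: "homeomorphism S T f g"
  shows "components T = image f ` components S"
proof
  show "image f ` components S \<subseteq> components T" using homeo_component[OF h] by blast
  show "components T \<subseteq> image f ` components S"
  proof
    fix D assume D: "D \<in> components T"
    have "g ` D \<in> components S" using homeo_component[OF homeomorphism_symD[OF h] D] .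
    moreover have "f ` g ` D = D"
      using in_components_subset[OF D] h homeomorphism_apply2 by (force simp: image_image)
    ultimately show "D \<in> image f ` components S" by (metis image_eqI)
  qed
qed

lemma homeo_components_card:
  assumes h: "homeomorphism S T f g"
  shows "card (components T) = card (components S) \<and> (finite (components T) \<longleftrightarrow> finite (components S))"
proof -
  have "inj_on f S" using h by (metis homeomorphism_apply1 inj_on_inverseI)
  then have "inj_on (image f) (components S)"
    by (metis Pow_iff in_components_subset inj_on_image_Pow inj_on_subset subsetI)
  then show ?thesis using homeo_components[OF h] by (simp add: card_image finite_image_iff)
qed

lemma delete_component:
  assumes S: "open S" and C: "C \<in> components S"
  shows "C - {a::complex} \<in> components (S - {a})"
proof -
  have CS: "C \<subseteq> S" "connected C" "C \<noteq> {}" "open C"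
    using in_components_subset[OF C] in_components_connected[OF C] in_components_nonempty[OF C] open_components[OF S C] by auto
  show ?thesis
    unfolding in_components_maximal
  proof (intro conjI allI impI)
    show "C - {a} \<noteq> {}" using CS by (metis Diff_empty insert_Diff not_open_singleton subset_singleton_iff Diff_eq_empty_iff)
    show "C - {a} \<subseteq> S - {a}" using CS by auto
    show "connected (C - {a})" using CS connected_open_delete[of C a] by simp
    fix D assume D: "D \<noteq> {} \<and> C - {a} \<subseteq> D \<and> D \<subseteq> S - {a} \<and> connected D"
    have "C \<inter> D \<noteq> {}" using D \<open>C - {a} \<noteq> {}\<close> by blast
    then have "D \<subseteq> C" using components_maximal[OF C] D by blast
    then show "D = C - {a}" using D by blast
  qed
qed

lemma delete_components_card:
  assumes S: "open S"
  shows "card (components (S - {a::complex})) = card (components S) \<and>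
         (finite (components (S - {a})) \<longleftrightarrow> finite (components S))"
proof -
  have eq: "components (S - {a}) = (\<lambda>C. C - {a}) ` components S"
  proof
    show "(\<lambda>C. C - {a}) ` components S \<subseteq> components (S - {a})"
      using delete_component[OF S] by blast
    show "components (S - {a}) \<subseteq> (\<lambda>C. C - {a}) ` components S"
    proof
      fix D assume D: "D \<in> components (S - {a})"
      then obtain x where x: "x \<in> D" using in_components_nonempty by blast
      then have xS: "x \<in> S" "x \<noteq> a" using D in_components_subset by blast+
      define C where "C = connected_component_set S x"
      have C: "C \<in> components S" using xS C_def componentsI by blast
      have "x \<in> C" using xS C_def by simp
      then have "x \<in> C - {a}" using xS by simp
      then have "D = C - {a}"
        using components_eq[OF D delete_component[OF S C]] x by blast
      then show "D \<in> (\<lambda>C. C - {a}) ` components S" using C by blast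
    qed
  qed
  have "inj_on (\<lambda>C. C - {a}) (components S)"
  proof (rule inj_onI)
    fix C1 C2 assume C1: "C1 \<in> components S" and C2: "C2 \<in> components S" and e: "C1 - {a} = C2 - {a}"
    have "C1 - {a} \<in> components (S - {a})" using delete_component[OF S C1] .
    then have "C1 - {a} \<noteq> {}" using in_components_nonempty by blast
    then have "C1 \<inter> C2 \<noteq> {}" using e by blast
    then show "C1 = C2" using components_eq[OF C1 C2] by blast
  qed
  then show ?thesis using eq by (simp add: card_image finite_image_iff)
qed

theorem lemma4:
  fixes n :: nat
  assumes "n \<ge> 2"
  shows "L_set n \<subseteq> C_set n"
proof
  fix f assume "f \<in> L_set n"
  then obtain F where F: "card F = n" "\<forall>L\<in>F. is_line L" "\<not> lines_general_position F"
      "finite (components (- \<Union>F))" "f = num_regions (\<Union>F)"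
    unfolding L_set_def by blast
  have finF: "finite F" using F(1) assms card.infinite by fastforce
  have ci: "\<forall>L\<in>F. closed L \<and> interior L = {}" using F(2) line_closed_interior by blast
  have "interior (\<Union>F) = {}" using union_empty_interior[OF finF ci] .
  then obtain Q where Q: "Q \<notin> \<Union>F" by (metis UNIV_I interior_UNIV empty_iff subsetI subset_antisym)
  define h where "h = (\<lambda>z::complex. inverse (z - Q))"
  define \<Phi> where "\<Phi> = (\<lambda>L. h ` L \<union> {0})"
  define G where "G = \<Phi> ` F"
  have h0: "h z \<noteq> 0" if "z \<noteq> Q" for z using that h_def by simp
  have hinj: "inj_on h (- {Q})" unfolding h_def by (rule inj_onI) simp
  have LO: "L \<subseteq> - {Q}" if "L \<in> F" for L using Q that by blast
  have circ: "is_circle (\<Phi> L)" if LF: "L \<in> F" for L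
  proof -
    obtain \<nu> c where nc: "\<nu> \<noteq> 0" "L = {z. Re (z * cnj \<nu>) = c}" using line_normal[OF F(2)[rule_format, OF LF]] by blast
    have QL: "Q \<notin> L" using Q LF by blast
    show ?thesis unfolding \<Phi>_def h_def by (rule line_to_circle[OF nc(1) nc(2) QL])
  qed
  have 0: "0 \<notin> h ` L" if LF: "L \<in> F" for L
  proof
    assume "0 \<in> h ` L"
    then obtain z where z: "z \<in> L" "h z = 0" by (metis imageE)
    have "z \<noteq> Q" using z(1) LO[OF LF] by blast
    then show False using h0 z(2) by blast
  qed
  have hL: "h ` L1 \<inter> h ` L2 = h ` (L1 \<inter> L2)" if "L1 \<in> F" "L2 \<in> F" for L1 L2
    using inj_on_image_Int[OF hinj LO[OF that(1)] LO[OF that(2)]] by simp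
  have \<Phi>inj: "inj_on \<Phi> F"
  proof (rule inj_onI)
    fix L1 L2 assume L: "L1 \<in> F" "L2 \<in> F" "\<Phi> L1 = \<Phi> L2"
    have a: "0 \<notin> h ` L1" "0 \<notin> h ` L2" using 0[OF L(1)] 0[OF L(2)] by auto
    have e: "h ` L1 \<union> {0} = h ` L2 \<union> {0}" using L(3) unfolding \<Phi>_def .
    have "h ` L1 = (h ` L1 \<union> {0}) - {0}" using a by (simp add: Diff_insert_absorb)
    also have "\<dots> = (h ` L2 \<union> {0}) - {0}" by (simp only: e)
    also have "\<dots> = h ` L2" using a by (simp add: Diff_insert_absorb)
    finally have "h ` L1 = h ` L2" .
    then show "L1 = L2" using inj_on_image_eq_iff[OF hinj LO[OF L(1)] LO[OF L(2)]] by blast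
  qed
  have cardG: "card G = n" using \<Phi>inj F(1) G_def card_image by blast
  have circG: "\<forall>C\<in>G. is_circle C" using circ G_def by blast
  have meetG: "\<forall>C1\<in>G. \<forall>C2\<in>G. C1 \<inter> C2 \<noteq> {}" unfolding G_def \<Phi>_def by blast
  have ngp: "\<not> circles_general_position G"
  proof (cases "n \<ge> 3")
    case True
    then obtain x y z where "x \<in> G" "y \<in> G" "z \<in> G" "x \<noteq> y" "x \<noteq> z" "y \<noteq> z"
      using three_distinct cardG by metis
    moreover have "0 \<in> x \<inter> y \<inter> z" using calculation unfolding G_def \<Phi>_def by blast
    ultimately show ?thesis unfolding circles_general_position_def by blast
  next
    case False
    then have "n = 2" using assms by simp
    then obtain L1 L2 where L12: "F = {L1, L2}" "L1 \<noteq> L2" using F(1) card_2_iff by metis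
    have "\<not> (\<forall>A\<in>F. \<forall>B\<in>F. A \<noteq> B \<longrightarrow> \<not> lines_parallel A B)"
      using F(3) L12 unfolding lines_general_position_def by auto
    then obtain A B where AB: "A \<in> F" "B \<in> F" "A \<noteq> B" "lines_parallel A B" by blast
    have "A \<inter> B = {}" using parallel_disjoint AB F(2) by blast
    then have "\<Phi> A \<inter> \<Phi> B = {0}" using hL[OF AB(1,2)] unfolding \<Phi>_def by auto
    moreover have "\<Phi> A \<noteq> \<Phi> B" using \<Phi>inj AB inj_on_eq_iff by metis
    ultimately have "circles_tangent (\<Phi> A) (\<Phi> B)" unfolding circles_tangent_def by auto
    then show ?thesis unfolding circles_general_position_def G_def using AB by blast
  qed
  define S where "S = - \<Union>F - {Q}"
  define T where "T = - \<Union>G"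
  define g where "g = (\<lambda>w::complex. inverse w + Q)"
  have UG: "\<Union>G = h ` \<Union>F \<union> {0}"
    using F(1) assms unfolding G_def \<Phi>_def by auto
  have homeo: "homeomorphism S T h g"
  proof (rule homeomorphismI)
    show "continuous_on S h" unfolding h_def S_def
      by (intro continuous_intros) auto
    show "continuous_on T g" unfolding g_def T_def UG
      by (intro continuous_intros) auto
    show "h ` S \<subseteq> T"
    proof
      fix w assume "w \<in> h ` S"
      then obtain z where z: "z \<in> S" "w = h z" by blast
      have "z \<noteq> Q" using z(1) S_def by blast
      then have "w \<noteq> 0" using z(2) h0 by simp
      moreover have "w \<notin> h ` \<Union>F"
      proof
        assume "w \<in> h ` \<Union>F"
        then obtain y where "y \<in> \<Union>F" "h y = h z" using z by blast
        moreover have "y \<noteq> Q" using Q calculation(1) by blast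
        moreover have "z \<noteq> Q" using z(1) S_def by blast
        ultimately have "y = z" using inj_onD[OF hinj, of y z] by blast
        then show False using \<open>y \<in> \<Union>F\<close> z S_def by blast
      qed
      ultimately show "w \<in> T" unfolding T_def UG by blast
    qed
    show "g ` T \<subseteq> S"
    proof
      fix z assume "z \<in> g ` T"
      then obtain w where w: "w \<in> T" "z = g w" by blast
      have w0: "w \<noteq> 0" using w(1) unfolding T_def UG by blast
      have hz: "h z = w" using w g_def h_def by simp
      have "z \<noteq> Q" using w0 w g_def by simp
      moreover have "z \<notin> \<Union>F"
      proof
        assume "z \<in> \<Union>F"
        then have "h z \<in> h ` \<Union>F" by blast
        then show False using hz w(1) unfolding T_def UG by blast
      qed
      ultimately show "z \<in> S" unfolding S_def by blast
    qed
    show "g (h x) = x" if "x \<in> S" for x using that S_def g_def h_def by simp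
    show "h (g y) = y" if "y \<in> T" for y using that g_def h_def by simp
  qed
  have closedU: "closed (\<Union>F)" using finF ci by (intro closed_Union) auto
  have openU: "open (- \<Union>F)" using closedU by (simp add: open_Compl)
  have c1: "card (components T) = card (components S) \<and> (finite (components T) \<longleftrightarrow> finite (components S))"
    using homeo_components_card[OF homeo] .
  have c2: "card (components S) = card (components (- \<Union>F)) \<and> (finite (components S) \<longleftrightarrow> finite (components (- \<Union>F)))"
    unfolding S_def using delete_components_card[OF openU] .
  have "finite (components (- \<Union>G))" using c1 c2 F(4) T_def by simp
  moreover have "f = num_regions (\<Union>G)" using c1 c2 F(5) T_def unfolding num_regions_def by simp
  ultimately show "f \<in> C_set n" unfolding C_set_def using cardG circG ngp meetG by blast
qed

end
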